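(* Let $s=1$, $d=2$ with basis $|+\rangle,|-\rangle$ of $\mathbb C^2$ and shift vectors $v_+=+1$, $v_-=-1$. Let $H=\frac1{\sqrt2}\begin{pmatrix}1&1\\1&-1\end{pmatrix}$, $\sigma_x=\begin{pmatrix}0&1\\1&0\end{pmatrix}$, and for $w\in(0,1)$ let $\nu_w=w\,\delta_H+(1-w)\,\delta_{\sigma_x}$. Then for the associated walk $\mathbf W$ (so $\widetilde U=wH+(1-w)\sigma_x$), $\mathbf W^2$ is strictly contractive on $\{\mathbb 1\}^\perp\subset\mathcal T$.
   Context: General setting: for a lattice dimension $s$, internal dimension $d$, shift vectors $v_1,\dots,v_d\in\mathbb Z^s$ and a Borel probability measure $\nu$ on $\mathcal U(d)$, put $\widetilde U=\int U\,\nu(dU)$, $T(B)=\int U^*BU\,\nu(dU)$. $\mathcal T$ denotes the Hilbert space of (a.e.-classes of) measurable functions $A:[0,2\pi)^s\to M_d(\mathbb C)$ with inner product $\langle A,B\rangle=(2\pi)^{-s}\int d^sp\,\frac1d\mathrm{tr}(A(p)^*B(p))$, norm $\|A\|=\langle A,A\rangle^{1/2}$ (momentum representation of translation-invariant operators on $\ell^2(\mathbb Z^s)\otimes\mathbb C^d$). $\mathbb 1$ is the constant identity function; $A_0=(2\pi)^{-s}\int A(p)d^sp$; $S(p)=\mathrm{diag}(e^{iv_1\cdot p},\dots,e^{iv_d\cdot p})$. The walk with shift $|x\otimes i\rangle\mapsto|x+v_i\otimes i\rangle$ and coins i.i.d. in space and time with law $\nu$ acts on $\mathcal T$ by $\mathbf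 W(A)(p)=S(p)^*\big[T(A_0)+\widetilde U^*(A(p)-A_0)\widetilde U\big]S(p)$. A bounded map $\mathbf V$ on $\mathcal T$ is strictly contractive on $\{\mathbb 1\}^\perp$ if there is $c<1$ with $\|\mathbf V(A)\|\le c\|A\|$ for all $A\in\mathcal T$ with $\langle\mathbb 1,A\rangle=0$. *)

theory Defs
  imports "HOL-Analysis.Analysis"
begin

(* 2x2 complex matrices; index 1 = |+>, index 2 = |-> (via 'vector') *)
type_synonym cmat = "complex^2^2"

definition mat2 :: "complex \<Rightarrow> complex \<Rightarrow> complex \<Rightarrow> complex \<Rightarrow> cmat" where
  "mat2 a b c d = vector [vector [a, b], vector [c, d]]"

definition adj :: "cmat \<Rightarrow> cmat" where
  "adj M = (\<chi> i j. cnj (M $ j $ i))"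

definition tr :: "cmat \<Rightarrow> complex" where
  "tr M = (\<Sum>i\<in>UNIV. M $ i $ i)"

definition Hm :: cmat where
  "Hm = mat2 (1 / sqrt 2) (1 / sqrt 2) (1 / sqrt 2) (- 1 / sqrt 2)"

definition sigx :: cmat where
  "sigx = mat2 0 1 1 0"

(* shift S(p) = diag(e^{i v_+ p}, e^{i v_- p}) with v_+ = 1, v_- = -1 *)
definition Sh :: "real \<Rightarrow> cmat" where
  "Sh p = mat2 (cis p) 0 0 (cis (- p))"

definition Ut :: "real \<Rightarrow> cmat" where
  "Ut w = w *\<^sub>R Hm + (1 - w) *\<^sub>R sigx"

(* T(B) = int U^* B U nu(dU) *)
definition Tmap :: "real \<Rightarrow> cmat \<Rightarrow> cmat" where
  "Tmap w B = w *\<^sub>R (adj Hm ** B ** Hm) + (1 - w) *\<^sub>R (adj sigx ** B ** sigx)"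

definition Pdom :: "real set" where
  "Pdom = {0..<2 * pi}"

definition A0 :: "(real \<Rightarrow> cmat) \<Rightarrow> cmat" where
  "A0 A = (\<chi> i j. complex_of_real (1 / (2 * pi)) *
              (\<integral>p. A p $ i $ j \<partial>(lebesgue_on Pdom)))"

definition inT :: "(real \<Rightarrow> cmat) \<Rightarrow> bool" where
  "inT A \<longleftrightarrow> A \<in> borel_measurable (lebesgue_on Pdom)
      \<and> integrable (lebesgue_on Pdom) (\<lambda>p. (norm (A p))^2)"

definition tinner :: "(real \<Rightarrow> cmat) \<Rightarrow> (real \<Rightarrow> cmat) \<Rightarrow> complex" where
  "tinner A B = complex_of_real (1 / (2 * pi)) *
      (\<integral>p. (1 / 2) * tr (adj (A p) ** B p) \<partial>(lebesgue_on Pdom))"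

definition tnorm :: "(real \<Rightarrow> cmat) \<Rightarrow> real" where
  "tnorm A = sqrt (Re (tinner A A))"

definition one_T :: "real \<Rightarrow> cmat" where
  "one_T = (\<lambda>p. mat 1)"

definition Wop :: "real \<Rightarrow> (real \<Rightarrow> cmat) \<Rightarrow> (real \<Rightarrow> cmat)" where
  "Wop w A = (\<lambda>p. adj (Sh p) **
       (Tmap w (A0 A) + adj (Ut w) ** (A p - A0 A) ** Ut w) ** Sh p)"

end

theory Submission
  imports Defs
begin


lemma mat2_nth: "mat2 a b c d $ 1 $ 1 = a" "mat2 a b c d $ 1 $ 2 = b"
  "mat2 a b c d $ 2 $ 1 = c" "mat2 a b c d $ 2 $ 2 = d"
  by (simp_all add: mat2_def)

lemma mat2_eta: "X = mat2 (X$1$1) (X$1$2) (X$2$1) (X$2$2)"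
  by (simp add: vec_eq_iff forall_2 mat2_nth)

lemma mat2_eq_iff: "mat2 a b c d = mat2 a' b' c' d' \<longleftrightarrow> a=a' \<and> b=b' \<and> c=c' \<and> d=d'"
  by (metis mat2_nth)

lemma mat2_mult: "mat2 a b c d ** mat2 e f g h = mat2 (a*e+b*g) (a*f+b*h) (c*e+d*g) (c*f+d*h)"
  by (simp add: vec_eq_iff forall_2 mat2_nth matrix_matrix_mult_def sum_2)

lemma mat2_add: "mat2 a b c d + mat2 e f g h = mat2 (a+e) (b+f) (c+g) (d+h)"
  by (simp add: vec_eq_iff forall_2 mat2_nth)

lemma mat2_diff: "mat2 a b c d - mat2 e f g h = mat2 (a-e) (b-f) (c-g) (d-h)"
  by (simp add: vec_eq_iff forall_2 mat2_nth)

lemma mat2_scaleR: "r *\<^sub>R mat2 a b c d = mat2 (r*\<^sub>R a) (r*\<^sub>R b) (r*\<^sub>R c) (r*\<^sub>R d)"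
  by (simp add: vec_eq_iff forall_2 mat2_nth)

lemma mat2_zero: "0 = mat2 0 0 0 0"
  by (simp add: vec_eq_iff forall_2 mat2_nth)

lemma mat2_one: "mat 1 = mat2 1 0 0 1"
  by (simp add: vec_eq_iff forall_2 mat2_nth mat_def)

lemma adj_mat2: "adj (mat2 a b c d) = mat2 (cnj a) (cnj c) (cnj b) (cnj d)"
  by (simp add: vec_eq_iff forall_2 mat2_nth adj_def)

lemma tr_mat2: "tr (mat2 a b c d) = a + d"
  by (simp add: tr_def sum_2 mat2_nth)

lemma norm_mat2: "(norm (mat2 a b c d))^2 = (cmod a)^2 + (cmod b)^2 + (cmod c)^2 + (cmod d)^2"
  by (simp add: norm_vec_def L2_set_def sum_2 mat2_nth)

lemma inner_mat2: "inner (mat2 a b c d) (mat2 e f g h) = inner a e + inner b f + inner c g + inner d h"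
  by (simp add: inner_vec_def sum_2 mat2_nth)

lemma Hm_eq: "Hm = mat2 (of_real (1/sqrt 2)) (of_real (1/sqrt 2)) (of_real (1/sqrt 2)) (- of_real (1/sqrt 2))"
  by (simp add: Hm_def)

definition rf :: "real \<Rightarrow> real \<Rightarrow> cmat" where
  "rf p q = mat2 (of_real p) (of_real q) (of_real q) (- of_real p)"

lemma norm_rf_conj:
  "(norm (rf p q ** Y ** rf p q))^2 = (p^2+q^2)^2 * (norm Y)^2"
proof -
  obtain a b c d where Y: "Y = mat2 a b c d" using mat2_eta by blast
  show ?thesis
    unfolding Y rf_def mat2_mult norm_mat2 cmod_power2
    by (simp add: power2_eq_square algebra_simps)
qed
lemma adj_rf: "adj (rf p q) = rf p q"
  by (simp add: rf_def adj_mat2)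

lemma Hm_rf: "Hm = rf (1/sqrt 2) (1/sqrt 2)"
  by (simp add: Hm_def rf_def)

lemma sigx_rf: "sigx = rf 0 1"
  by (simp add: sigx_def rf_def)

definition up :: "real \<Rightarrow> real" where "up w = w / sqrt 2"
definition uq :: "real \<Rightarrow> real" where "uq w = w / sqrt 2 + (1 - w)"

lemma Ut_rf: "Ut w = rf (up w) (uq w)"
  unfolding Ut_def Hm_rf sigx_rf rf_def mat2_scaleR mat2_add
  by (simp add: up_def uq_def scaleR_conv_of_real mat2_eq_iff algebra_simps)

definition lam2 :: "real \<Rightarrow> real" where "lam2 w = (up w)^2 + (uq w)^2"

lemma lam2_bounds: assumes "0 < w" "w < 1" shows "0 < lam2 w" "lam2 w < 1"
proof -
  have s: "sqrt 2 ^ 2 = 2" by simp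
  have s1: "sqrt 2 > 1" by simp
  have e: "lam2 w = w^2/2 + (w / sqrt 2 + (1 - w))^2"
    unfolding lam2_def up_def uq_def by (simp add: power_divide s)
  have pos: "w / sqrt 2 + (1 - w) > 0" using assms by (simp add: add_pos_nonneg)
  then show "0 < lam2 w" unfolding e by (simp add: add_nonneg_pos)
  define t where "t = w / sqrt 2"
  have t: "t * sqrt 2 = w" unfolding t_def by simp
  have "t < w" unfolding t_def using assms s1 by (simp add: divide_less_eq)
  have "t^2 * 2 = w^2" using t by (metis power_mult_distrib s)
  have "w^2/2 + (t + (1 - w))^2 < 1"
  proof -
    have "w^2/2 + (t + (1 - w))^2 = 1 - 2*((w-t)*(1-w))"
      using \<open>t^2 * 2 = w^2\<close> by (simp add: power2_eq_square algebra_simps)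
    moreover have "(w-t)*(1-w) > 0" using assms \<open>t < w\<close> by simp
    ultimately show ?thesis by simp
  qed
  then show "lam2 w < 1" unfolding e t_def .
qed

definition Kc :: "real \<Rightarrow> cmat \<Rightarrow> cmat" where "Kc w Y = adj (Ut w) ** Y ** Ut w"

lemma norm_Kc: "(norm (Kc w Y))^2 = (lam2 w)^2 * (norm Y)^2"
  by (simp add: Kc_def Ut_rf adj_rf norm_rf_conj lam2_def)

lemma norm_Kc': "norm (Kc w Y) = lam2 w * norm Y"
proof -
  have "lam2 w \<ge> 0" unfolding lam2_def by simp
  then show ?thesis using norm_Kc[of w Y]
    by (metis norm_ge_zero power_mult_distrib real_sqrt_abs abs_of_nonneg zero_le_mult_iff)
qed

lemma norm_conj_unit: "norm (rf p q ** Y ** rf p q) = norm Y" if "p^2 + q^2 = 1"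
  using norm_rf_conj[of p q Y] that by (simp add: power2_eq_iff_nonneg)

lemma Tmap_rf: "Tmap w B = w *\<^sub>R (rf (1/sqrt 2) (1/sqrt 2) ** B ** rf (1/sqrt 2) (1/sqrt 2))
   + (1 - w) *\<^sub>R (rf 0 1 ** B ** rf 0 1)"
  by (simp add: Tmap_def Hm_rf sigx_rf adj_rf)

lemma norm_Tmap: assumes "0 \<le> w" "w \<le> 1" shows "norm (Tmap w B) \<le> norm B"
proof -
  have h: "(1/sqrt 2)^2 + (1/sqrt 2)^2 = (1::real)" by (simp add: power_divide)
  have "norm (Tmap w B) \<le> norm (w *\<^sub>R (rf (1/sqrt 2) (1/sqrt 2) ** B ** rf (1/sqrt 2) (1/sqrt 2)))
     + norm ((1 - w) *\<^sub>R (rf 0 1 ** B ** rf 0 1))"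
    unfolding Tmap_rf by (rule norm_triangle_ineq)
  also have "\<dots> = w * norm B + (1 - w) * norm B"
    using assms by (simp add: norm_conj_unit h)
  finally show ?thesis by (simp add: algebra_simps)
qed

lemma Hconj: "rf (1/sqrt 2) (1/sqrt 2) ** mat2 a b c d ** rf (1/sqrt 2) (1/sqrt 2)
   = mat2 ((a+b+c+d)/2) ((a-b+c-d)/2) ((a+b-c-d)/2) ((a-b-c+d)/2)"
proof -
  define h where "h = complex_of_real (1/sqrt 2)"
  have r0: "(1/sqrt 2) * (1/sqrt 2) = (1/2::real)" by simp
  have r: "h * h = 1/2" unfolding h_def of_real_mult[symmetric] r0 by simp
  have e: "\<And>x y. x * h * (y * h) = x * y / 2" using r by (simp add: algebra_simps)
  show ?thesis unfolding rf_def mat2_mult mat2_eq_iff h_def[symmetric]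
    by (simp add: algebra_simps e r) (simp add: field_simps)?
qed

lemma Xconj: "rf 0 1 ** mat2 a b c d ** rf 0 1 = mat2 d c b a"
  by (simp add: rf_def mat2_mult)

definition Dg :: "cmat \<Rightarrow> cmat" where "Dg X = mat2 (X$1$1) 0 0 (X$2$2)"

lemma Tmap_traceless:
  assumes "tr a = 0" "0 \<le> w" "w \<le> 1"
  shows "(w^2 + (1-w)^2) * (norm (Tmap w a))^2 + (1 - (w^2 + (1-w)^2)) * (norm (Dg (Tmap w a)))^2
     \<le> (w^2 + (1-w)^2) * (norm a)^2"
proof -
  obtain x y z d where a: "a = mat2 x y z d" using mat2_eta by blast
  have d: "d = - x" using assms a tr_mat2 by (simp add: add_eq_0_iff)
  define P where "P = w * (y+z)/2 - (1-w) * x"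
  define Q where "Q = w * x + (1-w) * (y+z)/2"
  define v where "v = (y - z)/2"
  have Ta: "Tmap w a = mat2 P (Q - v) (Q + v) (-P)"
    unfolding Tmap_rf a d Hconj Xconj mat2_scaleR mat2_add mat2_eq_iff
    by (simp add: scaleR_conv_of_real P_def Q_def v_def field_simps)
  define u where "u = (y+z)/2"
  have par: "\<And>p q::complex. (cmod (p+q))^2 + (cmod (p-q))^2 = 2*(cmod p)^2 + 2*(cmod q)^2"
    unfolding cmod_power2 by (simp add: power2_eq_square algebra_simps)
  have yz: "y = u + v" "z = u - v" unfolding u_def v_def by (simp_all add: field_simps)
  have na: "(norm a)^2 = 2 * (cmod x)^2 + 2*(cmod u)^2 + 2*(cmod v)^2"
    unfolding a d norm_mat2 yz using par[of u v] by simp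
  have nT: "(norm (Tmap w a))^2 = 2 * (cmod P)^2 + 2*(cmod Q)^2 + 2*(cmod v)^2"
    unfolding Ta norm_mat2 using par[of Q v] by simp
  have nD: "(norm (Dg (Tmap w a)))^2 = 2 * (cmod P)^2"
    unfolding Ta Dg_def mat2_nth norm_mat2 by simp
  have PQ: "(cmod P)^2 + (cmod Q)^2 = (w^2 + (1-w)^2) * ((cmod x)^2 + (cmod u)^2)"
  proof -
    have e: "P = w*u - (1-w)*x" "Q = w*x + (1-w)*u" unfolding P_def Q_def u_def by simp_all
    show ?thesis unfolding e cmod_power2 by
      (simp add: power2_eq_square algebra_simps)
  qed
  define m where "m = w^2 + (1-w)^2"
  have m1: "m \<le> 1" unfolding m_def using assms(2,3)
    using mult_left_le_one_le[of w w] mult_left_le_one_le[of "1-w" "1-w"]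
    by (simp add: power2_eq_square)
  have "(1 - m) * (cmod P)^2 \<le> (1 - m) * (m * ((cmod x)^2 + (cmod u)^2))" 
  proof (rule mult_left_mono)
    have "0 \<le> (cmod Q)^2" by simp
    then show "(cmod P)^2 \<le> m * ((cmod x)^2 + (cmod u)^2)" using PQ[folded m_def] by linarith
  qed (use m1 in simp)
  moreover have "m * (cmod Q)^2 = m * (m * ((cmod x)^2 + (cmod u)^2)) - m * (cmod P)^2"
    using PQ[folded m_def] by (metis add_diff_cancel_left' right_diff_distrib)
  ultimately show ?thesis unfolding m_def[symmetric] na nT nD
    by (simp add: algebra_simps)
qed



abbreviation "MM \<equiv> lebesgue_on Pdom"

lemma Pdom_sets: "Pdom \<in> sets lebesgue"
  unfolding Pdom_def by simp

lemma Pdom_lmeas: "Pdom \<in> lmeasurable"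
  unfolding Pdom_def
  by (intro bounded_set_imp_lmeasurable) (auto intro: bounded_subset[of "{0..2*pi}"])

lemma space_MM: "space MM = Pdom" by simp

lemma measure_MM: "measure MM (space MM) = 2 * pi"
  using Pdom_sets unfolding Pdom_def by (simp add: measure_restrict_space)

interpretation MM: finite_measure MM
  by (rule finite_measure_lebesgue_on[OF Pdom_lmeas])

lemma int_cos2: "integral\<^sup>L MM (\<lambda>p. cos (2*p)) = 0"
proof -
  have integ: "integrable MM (\<lambda>p. cos (2*p))"
  proof (rule Bochner_Integration.integrable_bound[OF MM.integrable_const[of "1::real"]])
    show "(\<lambda>p. cos (2*p)) \<in> borel_measurable MM"
      by (intro continuous_imp_measurable_on_sets_lebesgue Pdom_sets continuous_intros)
  qed auto
  have h1: "((\<lambda>p. cos (2*p)) has_integral (integral\<^sup>L MM (\<lambda>p. cos (2*p)))) Pdom"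
    by (rule has_integral_integral_lebesgue_on[OF integ Pdom_sets])
  have h2: "((\<lambda>p. cos (2*p)) has_integral (sin (2*(2*pi))/2 - sin (2*0)/2)) {0..2*pi}"
  proof (rule fundamental_theorem_of_calculus)
    fix x :: real
    show "((\<lambda>p. sin (2*p)/2) has_vector_derivative cos (2*x)) (at x within {0..2*pi})"
      unfolding has_real_derivative_iff_has_vector_derivative[symmetric]
      by (auto intro!: derivative_eq_intros)
  qed simp
  have h3: "((\<lambda>p. cos (2*p)) has_integral 0) {0..2*pi}"
    using h2 by simp
  have h4: "((\<lambda>p. cos (2*p)) has_integral 0) Pdom"
    using h3 unfolding Pdom_def
    by (rule has_integral_spike_set_eq[THEN iffD1, rotated -1])
       (auto intro: negligible_subset[of "{2*pi}"])
  show ?thesis using has_integral_unique[OF h1 h4] .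
qed

lemma int_sin2: "integral\<^sup>L MM (\<lambda>p. sin (2*p)) = 0"
proof -
  have integ: "integrable MM (\<lambda>p. sin (2*p))"
  proof (rule Bochner_Integration.integrable_bound[OF MM.integrable_const[of "1::real"]])
    show "(\<lambda>p. sin (2*p)) \<in> borel_measurable MM"
      by (intro continuous_imp_measurable_on_sets_lebesgue Pdom_sets continuous_intros)
  qed auto
  have h1: "((\<lambda>p. sin (2*p)) has_integral (integral\<^sup>L MM (\<lambda>p. sin (2*p)))) Pdom"
    by (rule has_integral_integral_lebesgue_on[OF integ Pdom_sets])
  have h2: "((\<lambda>p. sin (2*p)) has_integral (- cos (2*(2*pi))/2 - (- cos (2*0)/2))) {0..2*pi}"
  proof (rule fundamental_theorem_of_calculus)
    fix x :: real
    show "((\<lambda>p. - cos (2*p)/2) has_vector_derivative sin (2*x)) (at x within {0..2*pi})"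
      unfolding has_real_derivative_iff_has_vector_derivative[symmetric]
      by (auto intro!: derivative_eq_intros)
  qed simp
  have c: "cos (2*(2*pi)) = 1"
    by (metis cos_npi_int cos_two_pi cos_periodic mult_2)
  have h3: "((\<lambda>p. sin (2*p)) has_integral 0) {0..2*pi}"
    using h2 c by simp
  have h4: "((\<lambda>p. sin (2*p)) has_integral 0) Pdom"
    using h3 unfolding Pdom_def
    by (rule has_integral_spike_set_eq[THEN iffD1, rotated -1])
       (auto intro: negligible_subset[of "{2*pi}"])
  show ?thesis using has_integral_unique[OF h1 h4] .
qed

lemma cis_eq: "cis x = complex_of_real (cos x) + \<i> * complex_of_real (sin x)"
  by (simp add: complex_eq_iff)

lemma meas_cis: "(\<lambda>p. cis (k*p)) \<in> borel_measurable MM"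
  by (intro continuous_imp_measurable_on_sets_lebesgue Pdom_sets continuous_intros)

lemma integrable_cis: "integrable MM (\<lambda>p. cis (k*p))"
  by (rule Bochner_Integration.integrable_bound[OF MM.integrable_const[of "1::real"] meas_cis]) auto

lemma int_cis2: "integral\<^sup>L MM (\<lambda>p. cis (2*p)) = 0" "integral\<^sup>L MM (\<lambda>p. cis (-2*p)) = 0"
proof -
  have ic: "integrable MM (\<lambda>p. cos (2*p))" "integrable MM (\<lambda>p. sin (2*p))"
    by (rule Bochner_Integration.integrable_bound[OF MM.integrable_const[of "1::real"]],
        intro continuous_imp_measurable_on_sets_lebesgue Pdom_sets continuous_intros, simp)+
  have "integral\<^sup>L MM (\<lambda>p. cis (2*p)) = integral\<^sup>L MM (\<lambda>p. complex_of_real (cos (2*p)) + \<i> * complex_of_real (sin (2*p)))"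
    by (simp add: cis_eq)
  also have "\<dots> = 0"
    using ic by (simp add: int_cos2 int_sin2)
  finally show "integral\<^sup>L MM (\<lambda>p. cis (2*p)) = 0" .
  have "integral\<^sup>L MM (\<lambda>p. cis (-2*p)) = integral\<^sup>L MM (\<lambda>p. complex_of_real (cos (2*p)) - \<i> * complex_of_real (sin (2*p)))"
    by (simp add: cis_eq)
  also have "\<dots> = 0"
    using ic by (simp add: int_cos2 int_sin2)
  finally show "integral\<^sup>L MM (\<lambda>p. cis (-2*p)) = 0" .
qed

definition L2 :: "(real \<Rightarrow> cmat) \<Rightarrow> bool" where
  "L2 F \<longleftrightarrow> F \<in> borel_measurable MM \<and> integrable MM (\<lambda>p. (norm (F p))^2)"

lemma inT_L2: "inT A = L2 A"
  unfolding inT_def L2_def by simp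

lemma L2_integrable: assumes "L2 F" shows "integrable MM F"
proof -
  have i: "integrable MM (\<lambda>p. 1 + (norm (F p))^2)"
    using assms unfolding L2_def by simp
  show ?thesis
  proof (rule Bochner_Integration.integrable_bound[OF i])
    show "F \<in> borel_measurable MM" using assms unfolding L2_def by simp
    show "AE x in MM. norm (F x) \<le> norm (1 + (norm (F x))\<^sup>2)"
    proof (rule AE_I2)
      fix x
      have "0 \<le> (norm (F x) - 1)^2" by simp
      then have "norm (F x) \<le> 1 + (norm (F x))\<^sup>2"
        unfolding power2_diff using norm_ge_zero[of "F x"] by (simp add: algebra_simps) (use norm_ge_zero[of "F x"] in linarith)
      then show "norm (F x) \<le> norm (1 + (norm (F x))\<^sup>2)" by simp
    qed
  qed
qed

lemma L2_const: "L2 (\<lambda>p. X)"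
  unfolding L2_def by simp

lemma L2_add: assumes "L2 F" "L2 G" shows "L2 (\<lambda>p. F p + G p)"
proof -
  have m: "(\<lambda>p. F p + G p) \<in> borel_measurable MM" using assms unfolding L2_def
    by (auto intro: borel_measurable_add)
  have i: "integrable MM (\<lambda>p. 2 * (norm (F p))^2 + 2 * (norm (G p))^2)"
    using assms unfolding L2_def by simp
  have "integrable MM (\<lambda>p. (norm (F p + G p))^2)"
  proof (rule Bochner_Integration.integrable_bound[OF i])
    show "(\<lambda>p. (norm (F p + G p))^2) \<in> borel_measurable MM" using m by simp
    show "AE x in MM. norm ((norm (F x + G x))^2) \<le> norm (2 * (norm (F x))^2 + 2 * (norm (G x))^2)"
    proof (rule AE_I2)
      fix x
      have t: "norm (F x + G x) \<le> norm (F x) + norm (G x)" by (rule norm_triangle_ineq)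
      have "(norm (F x + G x))^2 \<le> (norm (F x) + norm (G x))^2"
        using t by (simp add: power_mono)
      also have "\<dots> \<le> 2 * (norm (F x))^2 + 2 * (norm (G x))^2"
        using zero_le_power2[of "norm (F x) - norm (G x)"] unfolding power2_diff power2_sum
        by linarith
      finally show "norm ((norm (F x + G x))^2) \<le> norm (2 * (norm (F x))^2 + 2 * (norm (G x))^2)"
        by simp
    qed
  qed
  then show ?thesis using m unfolding L2_def by simp
qed

lemma L2_lin: assumes "bounded_linear L" "L2 F" shows "L2 (\<lambda>p. L (F p))"
proof -
  interpret L: bounded_linear L by (rule assms(1))
  obtain K where K: "\<And>x. norm (L x) \<le> norm x * K" "K > 0" using L.pos_bounded by blast
  have cL: "continuous_on UNIV L" using L.continuous_on continuous_on_id by blast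
  have m: "(\<lambda>p. L (F p)) \<in> borel_measurable MM"
    using measurable_compose[OF _ borel_measurable_continuous_onI[OF cL]] assms(2)
    unfolding L2_def by blast
  have i: "integrable MM (\<lambda>p. K^2 * (norm (F p))^2)"
    using assms unfolding L2_def by simp
  have "integrable MM (\<lambda>p. (norm (L (F p)))^2)"
  proof (rule Bochner_Integration.integrable_bound[OF i])
    show "(\<lambda>p. (norm (L (F p)))^2) \<in> borel_measurable MM" using m by simp
    show "AE x in MM. norm ((norm (L (F x)))^2) \<le> norm (K^2 * (norm (F x))^2)"
    proof (rule AE_I2)
      fix x
      have "(norm (L (F x)))^2 \<le> (norm (F x) * K)^2"
        using K(1)[of "F x"] by (simp add: power_mono)
      then show "norm ((norm (L (F x)))^2) \<le> norm (K^2 * (norm (F x))^2)"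
        by (simp add: power_mult_distrib mult.commute)
    qed
  qed
  then show ?thesis using m unfolding L2_def by simp
qed

lemma L2_diff: assumes "L2 F" "L2 G" shows "L2 (\<lambda>p. F p - G p)"
  using L2_add[OF assms(1) L2_lin[OF bounded_linear_minus[OF bounded_linear_ident] assms(2)]]
  by simp



definition Sc :: "real \<Rightarrow> cmat \<Rightarrow> cmat" where "Sc p Y = adj (Sh p) ** Y ** Sh p"

lemma cis_aux:
  "cis (-p) * y * cis p = y" "cis (-p) * y * cis (-p) = cis (-2*p) * y"
  "cis p * y * cis p = cis (2*p) * y" "cis p * y * cis (-p) = y"
proof -
  have e: "\<And>a b. cis a * y * cis b = cis (a+b) * y"
    by (simp add: cis_mult[symmetric] ac_simps)
  show "cis (-p) * y * cis p = y" "cis (-p) * y * cis (-p) = cis (-2*p) * y"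
    "cis p * y * cis p = cis (2*p) * y" "cis p * y * cis (-p) = y"
    unfolding e by simp_all
qed

lemma Sc_eq: "Sc p Y = mat2 (Y$1$1) (cis (-2*p) * Y$1$2) (cis (2*p) * Y$2$1) (Y$2$2)"
proof -
  obtain a b c d where Y: "Y = mat2 a b c d" using mat2_eta by blast
  show ?thesis
    unfolding Y Sc_def Sh_def adj_mat2 mat2_mult mat2_nth cis_cnj
    by (simp add: cis_aux)
qed

lemma norm_Sc: "norm (Sc p Y) = norm Y"
proof -
  obtain a b c d where Y: "Y = mat2 a b c d" using mat2_eta by blast
  have "(norm (Sc p Y))^2 = (norm Y)^2"
    unfolding Sc_eq Y mat2_nth norm_mat2 by (simp add: norm_mult)
  then show ?thesis by (simp add: power2_eq_iff_nonneg)
qed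

lemma Sc_add: "Sc p (X + Y) = Sc p X + Sc p Y"
  unfolding Sc_eq mat2_add by (simp add: algebra_simps)

lemma cont_mat2:
  assumes "continuous_on S f1" "continuous_on S f2" "continuous_on S f3" "continuous_on S f4"
  shows "continuous_on S (\<lambda>x. mat2 (f1 x) (f2 x) (f3 x) (f4 x))"
proof -
  have e: "(\<lambda>x. mat2 (f1 x) (f2 x) (f3 x) (f4 x)) =
    (\<lambda>x. \<chi> i. \<chi> j. if i = 1 then (if j = 1 then f1 x else f2 x) else (if j = 1 then f3 x else f4 x))"
    by (rule ext) (simp add: vec_eq_iff forall_2 mat2_nth)
  show ?thesis unfolding e
  proof (intro continuous_on_vec_lambda)
    fix i j :: 2
    show "continuous_on S (\<lambda>x. if i = 1 then (if j = 1 then f1 x else f2 x) else (if j = 1 then f3 x else f4 x))"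
      using assms by (cases "i = 1"; cases "j = 1") simp_all
  qed
qed

lemma L2_Sc: assumes "L2 F" shows "L2 (\<lambda>p. Sc p (F p))"
proof -
  have m1: "(\<lambda>p. p) \<in> borel_measurable MM"
    by (intro continuous_imp_measurable_on_sets_lebesgue Pdom_sets continuous_intros)
  have s: "\<And>i j. continuous_on UNIV (\<lambda>x::real \<times> cmat. snd x $ i $ j)"
    by (intro continuous_on_component continuous_on_snd continuous_on_id)
  have cc: "\<And>k. continuous_on UNIV (\<lambda>x::real \<times> cmat. cis (k * fst x))"
    by (intro continuous_on_cis continuous_on_mult continuous_on_const continuous_on_fst continuous_on_id)
  have c: "continuous_on UNIV (\<lambda>x. Sc (fst x) (snd x))"
    unfolding Sc_eq
    by (rule cont_mat2[OF s continuous_on_mult[OF cc s] continuous_on_mult[OF cc s] s])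
  have mF: "F \<in> borel_measurable MM" using assms unfolding L2_def by simp
  have m: "(\<lambda>p. Sc p (F p)) \<in> borel_measurable MM"
    using borel_measurable_continuous_Pair[OF m1 mF c] by simp
  have i: "integrable MM (\<lambda>p. (norm (F p))^2)" using assms unfolding L2_def by simp
  have i2: "integrable MM (\<lambda>p. (norm (Sc p (F p)))^2)" using i by (simp only: norm_Sc)
  show ?thesis unfolding L2_def using m i2 by (rule conjI)
qed

definition mean :: "(real \<Rightarrow> cmat) \<Rightarrow> cmat" where
  "mean F = (1/(2*pi)) *\<^sub>R integral\<^sup>L MM F"

definition Nsq :: "(real \<Rightarrow> cmat) \<Rightarrow> real" where
  "Nsq F = (1/(2*pi)) * integral\<^sup>L MM (\<lambda>p. (norm (F p))^2)"

lemma bl_nth2: "bounded_linear (\<lambda>x::cmat. x $ i $ j)"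
  by (rule bounded_linear_compose[OF bounded_linear_vec_nth bounded_linear_vec_nth])

lemma integral_nth2: fixes F :: "real \<Rightarrow> cmat" assumes "integrable MM F"
  shows "integral\<^sup>L MM (\<lambda>p. F p $ i $ j) = integral\<^sup>L MM F $ i $ j"
  using integral_bounded_linear[OF bl_nth2 assms] by simp

lemma A0_mean: assumes "integrable MM F" shows "A0 F = mean F"
  unfolding A0_def mean_def
  by (simp add: vec_eq_iff integral_nth2[OF assms]) (simp add: scaleR_conv_of_real)

lemma Nsq_nonneg: "0 \<le> Nsq F"
  unfolding Nsq_def by (simp add: integral_nonneg_AE)

lemma Nsq_cong: assumes "\<And>p. norm (F p) = norm (G p)" shows "Nsq F = Nsq G"
  unfolding Nsq_def assms ..

lemma decomp:
  assumes "L2 G" "integral\<^sup>L MM G = 0"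
  shows "Nsq (\<lambda>p. X + G p) = (norm X)^2 + Nsq G"
proof -
  have iG: "integrable MM G" by (rule L2_integrable[OF assms(1)])
  have i2: "integrable MM (\<lambda>p. (norm (G p))^2)" using assms(1) unfolding L2_def by simp
  have e: "\<And>p. (norm (X + G p))^2 = (norm X)^2 + 2 * inner X (G p) + (norm (G p))^2"
    by (simp add: power2_norm_eq_inner inner_add_left inner_add_right inner_commute)
  have iI: "integrable MM (\<lambda>p. inner X (G p))" using iG by simp
  have "integral\<^sup>L MM (\<lambda>p. (norm (X + G p))^2)
     = integral\<^sup>L MM (\<lambda>p. (norm X)^2 + 2 * inner X (G p) + (norm (G p))^2)"
    unfolding e ..
  also have "\<dots> = integral\<^sup>L MM (\<lambda>p. (norm X)^2) + integral\<^sup>L MM (\<lambda>p. 2 * inner X (G p))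
      + integral\<^sup>L MM (\<lambda>p. (norm (G p))^2)"
    using iI i2 by (simp add: integral_add)
  also have "integral\<^sup>L MM (\<lambda>p. 2 * inner X (G p)) = 0"
    using iG assms(2) by simp
  also have "integral\<^sup>L MM (\<lambda>p. (norm X)^2) = 2 * pi * (norm X)^2"
    using measure_MM by simp
  finally show ?thesis unfolding Nsq_def by (simp add: field_simps)
qed

lemma integral_sub_mean: assumes "L2 F" shows "integral\<^sup>L MM (\<lambda>p. F p - mean F) = 0"
proof -
  have iF: "integrable MM F" by (rule L2_integrable[OF assms])
  have "integral\<^sup>L MM (\<lambda>p. F p - mean F) = integral\<^sup>L MM F - (2*pi) *\<^sub>R mean F"
    using iF measure_MM by (simp add: Bochner_Integration.integral_diff)
  also have "\<dots> = 0" unfolding mean_def by simp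
  finally show ?thesis .
qed

lemma decomp2: assumes "L2 F" shows "Nsq F = (norm (mean F))^2 + Nsq (\<lambda>p. F p - mean F)"
proof -
  have "L2 (\<lambda>p. F p - mean F)" by (rule L2_diff[OF assms L2_const])
  from decomp[OF this integral_sub_mean[OF assms], of "mean F"] show ?thesis by simp
qed

lemma mean_le: assumes "L2 F" shows "(norm (mean F))^2 \<le> Nsq F"
  using decomp2[OF assms] Nsq_nonneg[of "\<lambda>p. F p - mean F"] by linarith

lemma tnorm_Nsq: "tnorm F = sqrt (Nsq F / 2)"
proof -
  have e: "\<And>X::cmat. tr (adj X ** X) = complex_of_real ((norm X)^2)"
  proof -
    fix X :: cmat
    obtain a b c d where X: "X = mat2 a b c d" using mat2_eta by blast
    show "tr (adj X ** X) = complex_of_real ((norm X)^2)"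
      unfolding X adj_mat2 mat2_mult tr_mat2 norm_mat2 of_real_add complex_norm_square
      by (simp add: mult.commute)
  qed
  have e2: "\<And>p. (1/2) * tr (adj (F p) ** F p) = complex_of_real ((norm (F p))^2 / 2)"
    unfolding e by simp
  have "tinner F F = complex_of_real (1/(2*pi)) * complex_of_real (integral\<^sup>L MM (\<lambda>p. (norm (F p))^2 / 2))"
    unfolding tinner_def e2 integral_complex_of_real ..
  also have "\<dots> = complex_of_real (Nsq F / 2)"
    unfolding Nsq_def of_real_mult[symmetric] by simp
  finally have "tinner F F = complex_of_real (Nsq F / 2)" .
  then have "Re (tinner F F) = Nsq F / 2" by (simp only: Re_complex_of_real)
  then show ?thesis unfolding tnorm_def by simp
qed

lemma linear_conjm: fixes A B :: cmat shows "linear (\<lambda>Y::cmat. A ** Y ** B)"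
proof (rule linearI)
  fix X Y :: cmat and c :: real
  obtain a1 a2 a3 a4 where A: "A = mat2 a1 a2 a3 a4" using mat2_eta by blast
  obtain b1 b2 b3 b4 where B: "B = mat2 b1 b2 b3 b4" using mat2_eta by blast
  obtain x1 x2 x3 x4 where X: "X = mat2 x1 x2 x3 x4" using mat2_eta by blast
  obtain y1 y2 y3 y4 where Y: "Y = mat2 y1 y2 y3 y4" using mat2_eta by blast
  show "A ** (X + Y) ** B = A ** X ** B + A ** Y ** B"
    unfolding A B X Y mat2_add mat2_mult mat2_eq_iff by (simp add: algebra_simps)
  show "A ** (c *\<^sub>R X) ** B = c *\<^sub>R (A ** X ** B)"
    unfolding A B X mat2_scaleR mat2_mult mat2_eq_iff by (simp add: scaleR_conv_of_real algebra_simps)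
qed

lemma bl_conjm: fixes A B :: cmat shows "bounded_linear (\<lambda>Y::cmat. A ** Y ** B)"
  using linear_conjm linear_conv_bounded_linear by blast

lemma bl_E12: "bounded_linear (\<lambda>z. mat2 0 z 0 0)"
proof -
  have "linear (\<lambda>z. mat2 0 z 0 0)"
    by (rule linearI) (simp_all add: mat2_add mat2_scaleR)
  then show ?thesis using linear_conv_bounded_linear by blast
qed

lemma bl_E21: "bounded_linear (\<lambda>z. mat2 0 0 z 0)"
proof -
  have "linear (\<lambda>z. mat2 0 0 z 0)"
    by (rule linearI) (simp_all add: mat2_add mat2_scaleR)
  then show ?thesis using linear_conv_bounded_linear by blast
qed

lemma integral_Sc_const: "integral\<^sup>L MM (\<lambda>p. Sc p X) = (2*pi) *\<^sub>R Dg X"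
proof -
  have e: "\<And>p. Sc p X = Dg X + (mat2 0 (cis (-2*p) * X$1$2) 0 0 + mat2 0 0 (cis (2*p) * X$2$1) 0)"
    unfolding Sc_eq Dg_def mat2_add by simp
  have i1: "integrable MM (\<lambda>p. cis (-2*p) * X$1$2)" "integrable MM (\<lambda>p. cis (2*p) * X$2$1)"
    by (rule integrable_mult_left, rule integrable_cis)+
  have j1: "integrable MM (\<lambda>p. mat2 0 (cis (-2*p) * X$1$2) 0 0)"
    by (rule integrable_bounded_linear[OF bl_E12 i1(1)])
  have j2: "integrable MM (\<lambda>p. mat2 0 0 (cis (2*p) * X$2$1) 0)"
    by (rule integrable_bounded_linear[OF bl_E21 i1(2)])
  have k1: "integral\<^sup>L MM (\<lambda>p. mat2 0 (cis (-2*p) * X$1$2) 0 0) = 0"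
    using integral_bounded_linear[OF bl_E12 i1(1)] int_cis2(2) mat2_zero
    by (simp add: integral_mult_left_zero)
  have k2: "integral\<^sup>L MM (\<lambda>p. mat2 0 0 (cis (2*p) * X$2$1) 0) = 0"
    using integral_bounded_linear[OF bl_E21 i1(2)] int_cis2(1) mat2_zero
    by (simp add: integral_mult_left_zero)
  show ?thesis unfolding e
    using j1 j2 k1 k2 measure_MM by (simp add: Bochner_Integration.integral_add)
qed

lemma mean_Sc_const: "mean (\<lambda>p. Sc p X) = Dg X"
  unfolding mean_def integral_Sc_const by simp

lemma mean_lin: assumes "bounded_linear L" "L2 F" shows "mean (\<lambda>p. L (F p)) = L (mean F)"
proof -
  interpret L: bounded_linear L by (rule assms(1))
  show ?thesis unfolding mean_def
    using integral_bounded_linear[OF assms(1) L2_integrable[OF assms(2)]] by (simp add: L.scaleR)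
qed

lemma tinner_one: assumes "integrable MM A" shows "tinner one_T A = (1/2) * tr (mean A)"
proof -
  have ad: "adj (mat 1) = mat 1" unfolding mat2_one adj_mat2 by simp
  have i: "integrable MM (\<lambda>p. A p $ 1 $ 1)" "integrable MM (\<lambda>p. A p $ 2 $ 2)"
    using integrable_bounded_linear[OF bl_nth2 assms] by auto
  have "tinner one_T A = complex_of_real (1/(2*pi)) * integral\<^sup>L MM (\<lambda>p. (1/2) * (A p $ 1 $ 1 + A p $ 2 $ 2))"
    unfolding tinner_def one_T_def ad matrix_mul_lid tr_def sum_2 ..
  also have "\<dots> = complex_of_real (1/(2*pi)) * ((1/2) * (integral\<^sup>L MM A $ 1 $ 1 + integral\<^sup>L MM A $ 2 $ 2))"
    using i by (simp add: integral_nth2[OF assms, symmetric])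
  also have "\<dots> = (1/2) * tr (mean A)"
    unfolding mean_def tr_def sum_2 vector_scaleR_component by (simp add: scaleR_conv_of_real algebra_simps)
  finally show ?thesis .
qed




lemma arith_final:
  fixes rho m l t e d n cc X ND :: real
  assumes r: "0 < rho" "rho < 1" and mm: "0 < m" "m < 1"
    and l: "0 \<le> l" "l^2 = rho" and t: "0 \<le> t" and d: "0 \<le> d" and cc: "0 \<le> cc"
    and h4: "m * e^2 + (1-m) * d^2 \<le> m * n^2"
    and hX: "X = e^2 + rho * t^2"
    and h2: "cc^2 \<le> X" and h3: "cc \<le> d + l * t"
    and h1: "ND \<le> cc^2 + rho * (X - cc^2)"
  shows "ND \<le> max (1 - (1-rho)*(1-m)/2) (rho * (1 + (1-rho)*(1-m)/2)) * (n^2 + t^2)"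
proof -
  define g where "g = (1-rho)*(1-m)/2"
  have g0: "0 \<le> g" unfolding g_def using r mm by simp
  have g1: "g \<le> 1 - rho"
  proof -
    have "(1-rho) * ((1-m)/2) \<le> (1-rho) * 1" using r mm by (intro mult_left_mono) auto
    then show ?thesis unfolding g_def by simp
  qed
  have s1a: "cc^2 \<le> (d + l*t)^2" using h3 cc by (simp add: power_mono)
  have s1b: "(d + l*t)^2 \<le> 2*d^2 + 2*rho*t^2"
  proof -
    have "0 \<le> (d - l*t)^2" by simp
    then show ?thesis unfolding l(2)[symmetric] power2_sum power2_diff power_mult_distrib
      by (simp add: algebra_simps)
  qed
  have s1: "cc^2 \<le> 2*d^2 + 2*rho*t^2" using s1a s1b by linarith
  have s2a: "0 \<le> (1 - rho - g) * (X - cc^2)" using g1 h2 by simp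
  have s2: "ND \<le> (1-g)*X + g*cc^2" using h1 s2a by (simp add: algebra_simps)
  have s3: "e^2 \<le> n^2"
  proof -
    have "0 \<le> (1-m) * d^2" using mm by simp
    then have "m * e^2 \<le> m * n^2" using h4 by linarith
    then show ?thesis using mm by simp
  qed
  have s4a: "(1-m) * d^2 \<le> m * (n^2 - e^2)" using h4 by (simp add: algebra_simps)
  have s4b: "(1-rho)*m \<le> 1 - g"
  proof -
    have "(1-rho)*m + g = (1-rho) * ((1+m)/2)" unfolding g_def by (simp add: field_simps)
    also have "\<dots> \<le> (1-rho) * 1" using r mm by (intro mult_left_mono) auto
    finally show ?thesis using r by (simp add: algebra_simps)
  qed
  have s4: "g * (2*d^2) \<le> (1-g) * (n^2 - e^2)"
  proof -
    have "g * (2*d^2) = (1-rho) * ((1-m)*d^2)" unfolding g_def by (simp add: field_simps)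
    also have "\<dots> \<le> (1-rho) * (m * (n^2 - e^2))" using s4a r by (intro mult_left_mono) auto
    also have "\<dots> = ((1-rho)*m) * (n^2 - e^2)" by simp
    also have "\<dots> \<le> (1-g) * (n^2 - e^2)" using s4b s3 by (intro mult_right_mono) auto
    finally show ?thesis .
  qed
  have s5: "g * cc^2 \<le> g * (2*d^2) + g * (2*rho*t^2)"
    using s1 g0 by (simp add: distrib_left[symmetric] mult_left_mono)
  have s6: "ND \<le> (1-g)*n^2 + (rho*(1+g))*t^2"
    using s2 s5 s4 hX by (simp add: algebra_simps)
  define k where "k = max (1 - g) (rho * (1 + g))"
  have "(1-g)*n^2 \<le> k * n^2" unfolding k_def by (intro mult_right_mono) auto
  moreover have "(rho*(1+g))*t^2 \<le> k * t^2" unfolding k_def by (intro mult_right_mono) auto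
  ultimately have "ND \<le> k * (n^2 + t^2)" using s6 by (simp add: algebra_simps)
  then show ?thesis unfolding k_def g_def .
qed




lemma Nsq_scale: assumes "\<And>p. norm (F p) = k * norm (G p)" shows "Nsq F = k^2 * Nsq G"
  unfolding Nsq_def assms power_mult_distrib by simp

lemma mean_add: assumes "L2 F" "L2 G" shows "mean (\<lambda>p. F p + G p) = mean F + mean G"
  unfolding mean_def
  using L2_integrable[OF assms(1)] L2_integrable[OF assms(2)]
  by (simp add: Bochner_Integration.integral_add scaleR_add_right)

lemma bl_Kc: "bounded_linear (Kc w)"
  unfolding Kc_def by (rule bl_conjm)

lemma step:
  assumes "L2 A" "0 \<le> w" "w \<le> 1"
  shows "L2 (Wop w A)"
    "Nsq (Wop w A) = (norm (Tmap w (mean A)))^2 + (lam2 w)^2 * Nsq (\<lambda>p. A p - mean A)"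
    "mean (Wop w A) = Dg (Tmap w (mean A)) + mean (\<lambda>p. Sc p (Kc w (A p - mean A)))"
    "(norm (mean (\<lambda>p. Sc p (Kc w (A p - mean A)))))^2 \<le> (lam2 w)^2 * Nsq (\<lambda>p. A p - mean A)"
proof -
  define a where "a = mean A"
  define B where "B = (\<lambda>p. A p - a)"
  have iA: "integrable MM A" by (rule L2_integrable[OF assms(1)])
  have A0: "A0 A = a" unfolding a_def by (rule A0_mean[OF iA])
  have LB: "L2 B" unfolding B_def by (rule L2_diff[OF assms(1) L2_const])
  have intB: "integral\<^sup>L MM B = 0" unfolding B_def a_def by (rule integral_sub_mean[OF assms(1)])
  define KB where "KB = (\<lambda>p. Kc w (B p))"
  have LKB: "L2 KB" unfolding KB_def by (rule L2_lin[OF bl_Kc LB])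
  have intKB: "integral\<^sup>L MM KB = 0"
  proof -
    interpret K: bounded_linear "Kc w" by (rule bl_Kc)
    show ?thesis unfolding KB_def
      using integral_bounded_linear[OF bl_Kc L2_integrable[OF LB]] intB K.zero by simp
  qed
  have NKB: "Nsq KB = (lam2 w)^2 * Nsq B"
    by (rule Nsq_scale) (simp add: KB_def norm_Kc')
  define Y where "Y = (\<lambda>p. Tmap w a + KB p)"
  have LY: "L2 Y" unfolding Y_def by (rule L2_add[OF L2_const LKB])
  have C: "Wop w A = (\<lambda>p. Sc p (Y p))"
    unfolding Wop_def A0 Y_def KB_def B_def Kc_def Sc_def ..
  show "L2 (Wop w A)" unfolding C by (rule L2_Sc[OF LY])
  have "Nsq (Wop w A) = Nsq Y" unfolding C by (rule Nsq_cong) (simp add: norm_Sc)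
  also have "\<dots> = (norm (Tmap w a))^2 + Nsq KB" unfolding Y_def by (rule decomp[OF LKB intKB])
  finally show "Nsq (Wop w A) = (norm (Tmap w (mean A)))^2 + (lam2 w)^2 * Nsq (\<lambda>p. A p - mean A)"
    unfolding NKB B_def a_def .
  have "mean (Wop w A) = mean (\<lambda>p. Sc p (Tmap w a) + Sc p (KB p))"
    unfolding C Y_def Sc_add ..
  also have "\<dots> = mean (\<lambda>p. Sc p (Tmap w a)) + mean (\<lambda>p. Sc p (KB p))"
    by (rule mean_add[OF L2_Sc[OF L2_const] L2_Sc[OF LKB]])
  finally show "mean (Wop w A) = Dg (Tmap w (mean A)) + mean (\<lambda>p. Sc p (Kc w (A p - mean A)))"
    unfolding mean_Sc_const KB_def B_def a_def .
  have "(norm (mean (\<lambda>p. Sc p (KB p))))^2 \<le> Nsq (\<lambda>p. Sc p (KB p))"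
    by (rule mean_le[OF L2_Sc[OF LKB]])
  also have "\<dots> = Nsq KB" by (rule Nsq_cong) (simp add: norm_Sc)
  finally show "(norm (mean (\<lambda>p. Sc p (Kc w (A p - mean A)))))^2 \<le> (lam2 w)^2 * Nsq (\<lambda>p. A p - mean A)"
    unfolding NKB unfolding KB_def B_def a_def .
qed

theorem lemma1:
  fixes w :: real
  assumes "0 < w" and "w < 1"
  shows "\<exists>c < 1. \<forall>A. inT A \<and> tinner one_T A = 0 \<longrightarrow>
           tnorm (Wop w (Wop w A)) \<le> c * tnorm A"
proof -
  define rho where "rho = (lam2 w)^2"
  define m where "m = w^2 + (1-w)^2"
  define g where "g = (1-rho)*(1-m)/2"
  define k where "k = max (1 - g) (rho * (1 + g))"
  have l0: "0 < lam2 w" "lam2 w < 1" using lam2_bounds assms by auto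
  have r: "0 < rho" "rho < 1" unfolding rho_def using l0
    by (simp, simp add: power_less_one_iff abs_less_iff)
  have mm: "0 < m" "m < 1"
  proof -
    show "0 < m" unfolding m_def using assms by (simp add: add_pos_nonneg)
    have "w * w < w * 1" using assms by (intro mult_strict_left_mono) auto
    moreover have "(1-w) * (1-w) < (1-w) * 1" using assms by (intro mult_strict_left_mono) auto
    ultimately show "m < 1" unfolding m_def power2_eq_square by simp
  qed
  have g0: "0 < g" unfolding g_def using r mm by simp
  have g1: "g \<le> 1 - rho"
  proof -
    have "(1-rho) * ((1-m)/2) \<le> (1-rho) * 1" using r mm by (intro mult_left_mono) auto
    then show ?thesis unfolding g_def by simp
  qed
  have k1: "k < 1"
  proof -
    have "rho * (1 + g) \<le> rho * (2 - rho)" using g1 r by (intro mult_left_mono) auto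
    also have "\<dots> = 1 - (1-rho)^2" by (simp add: power2_eq_square algebra_simps)
    also have "\<dots> < 1" using r by simp
    finally show ?thesis unfolding k_def using g0 by simp
  qed
  have k0: "0 \<le> k" unfolding k_def using g1 r by (simp add: le_max_iff_disj)
  show ?thesis
  proof (intro exI[of _ "sqrt k"] conjI allI impI)
    show "sqrt k < 1" using k1 k0 by simp
    fix A assume H: "inT A \<and> tinner one_T A = 0"
    have LA: "L2 A" using H inT_L2 by simp
    define a where "a = mean A"
    have tra: "tr a = 0"
      using H tinner_one[OF L2_integrable[OF LA]] unfolding a_def by simp
    define NB where "NB = Nsq (\<lambda>p. A p - mean A)"
    have NA: "Nsq A = (norm a)^2 + NB" unfolding NB_def a_def by (rule decomp2[OF LA])
    define C where "C = Wop w A"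
    have w01: "0 \<le> w" "w \<le> 1" using assms by auto
    note sA = step[OF LA w01]
    have LC: "L2 C" unfolding C_def by (rule sA(1))
    define c where "c = mean C"
    define NX where "NX = Nsq C"
    have NC: "NX = (norm (Tmap w a))^2 + rho * NB"
      unfolding NX_def C_def sA(2) a_def NB_def rho_def ..
    have cnorm: "norm c \<le> norm (Dg (Tmap w a)) + lam2 w * sqrt NB"
    proof -
      have "c = Dg (Tmap w a) + mean (\<lambda>p. Sc p (Kc w (A p - mean A)))"
        unfolding c_def C_def sA(3) a_def ..
      then have "norm c \<le> norm (Dg (Tmap w a)) + norm (mean (\<lambda>p. Sc p (Kc w (A p - mean A))))"
        using norm_triangle_ineq[of "Dg (Tmap w a)" "mean (\<lambda>p. Sc p (Kc w (A p - mean A)))"] by simp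
      moreover have "norm (mean (\<lambda>p. Sc p (Kc w (A p - mean A)))) \<le> lam2 w * sqrt NB"
      proof -
        have NB0: "0 \<le> NB" unfolding NB_def by (rule Nsq_nonneg)
        have "(norm (mean (\<lambda>p. Sc p (Kc w (A p - mean A)))))^2 \<le> (lam2 w)^2 * NB"
          using sA(4) unfolding NB_def .
        also have "(lam2 w)^2 * NB = (lam2 w * sqrt NB)^2"
          using NB0 by (simp add: power_mult_distrib)
        finally have h: "(norm (mean (\<lambda>p. Sc p (Kc w (A p - mean A)))))^2 \<le> (lam2 w * sqrt NB)^2" .
        have "0 \<le> lam2 w * sqrt NB" using l0 NB0 by simp
        then show ?thesis by (rule power2_le_imp_le[OF h])
      qed
      ultimately show ?thesis by linarith
    qed
    have c2: "(norm c)^2 \<le> NX" unfolding c_def NX_def by (rule mean_le[OF LC])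
    note sC = step[OF LC w01]
    have ND: "Nsq (Wop w C) \<le> (norm c)^2 + rho * (NX - (norm c)^2)"
    proof -
      have e: "Nsq C = (norm c)^2 + Nsq (\<lambda>p. C p - c)" unfolding c_def by (rule decomp2[OF LC])
      have "Nsq (Wop w C) = (norm (Tmap w c))^2 + rho * Nsq (\<lambda>p. C p - c)"
        unfolding sC(2) c_def rho_def ..
      also have "(norm (Tmap w c))^2 \<le> (norm c)^2"
        using norm_Tmap[OF w01, of c] by (simp add: power_mono)
      finally show ?thesis using e unfolding NX_def by simp
    qed
    have h4: "m * (norm (Tmap w a))^2 + (1-m) * (norm (Dg (Tmap w a)))^2 \<le> m * (norm a)^2"
      unfolding m_def by (rule Tmap_traceless[OF tra w01])
    have NB0: "0 \<le> NB" unfolding NB_def by (rule Nsq_nonneg)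
    have NC': "NX = (norm (Tmap w a))^2 + rho * (sqrt NB)^2" using NC NB0 by simp
    have fin: "Nsq (Wop w C) \<le> k * ((norm a)^2 + (sqrt NB)^2)"
      unfolding k_def g_def
      by (rule arith_final[of rho m "lam2 w" "sqrt NB" "norm (Dg (Tmap w a))" "norm c"
            "norm (Tmap w a)" "norm a" NX "Nsq (Wop w C)",
            OF r mm _ _ _ _ _ h4 NC' c2 cnorm ND])
         (use l0 NB0 in \<open>simp_all add: rho_def\<close>)
    then have fin2: "Nsq (Wop w C) \<le> k * Nsq A" unfolding NA using NB0 by simp
    have "tnorm (Wop w (Wop w A)) = sqrt (Nsq (Wop w C) / 2)" unfolding C_def tnorm_Nsq ..
    also have "\<dots> \<le> sqrt (k * Nsq A / 2)" using fin2 by (simp add: divide_right_mono)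
    also have "\<dots> = sqrt k * tnorm A" unfolding tnorm_Nsq real_sqrt_mult[symmetric] by simp
    finally show "tnorm (Wop w (Wop w A)) \<le> sqrt k * tnorm A" .
  qed
qed


end
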